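(* Let $\lambda$ be a partition with at most $n$ parts, let $\bar\lambda\in\mathbb{N}^n$ be obtained from $\lambda$ by replacing every part equal to $1$ by $0$, let $\nu\in S_n(\bar\lambda)$ be a rearrangement of $\bar\lambda$, and let $S\subseteq\{1,\dots,n\}$ with $\#S=\ell(\lambda)$ (the number of nonzero parts of $\lambda$). Then $$\sum_{\substack{\mu\in S_n(\lambda)\\ \mathrm{Supp}(\mu)=S}}a^\nu_\mu\big|_{q=1}=1.$$
   Context: $S_n(\lambda)$ is the set of rearrangements of $\lambda$, and $\mathrm{Supp}(\mu)=\{i:\mu_i>0\}$. Generalized two-line queues and $a^\nu_\mu\in\mathbb{Q}(q,t)$. For $\nu,\mu\in\mathbb{N}^n$ (top row $\nu$, bottom row $\mu$), require: $\nu$ has no part equal to $1$; $\#\{i:\mu_i=j\}=\#\{i:\nu_i=j\}$ for every $j>1$; and for each $i$, $\mu_i=0$ or $\nu_i\le\mu_i$. Place a ball labeled $\nu_i$ in column $i$ of the top row when $\nu_i>0$, and a ball labeled $\mu_i$ in column $i$ of the bottom row when $\mu_i>0$. A generalized two-line queue in $\mathcal{Q}^\nu_\mu$ is a bijection pairing each top ball with a bottom ball of the same label, such that whenever a top ball of label $a$ lies directly above a bottom ball of label $a$ they are paired to each other (trivial pairing); each pairing is drawn as the shortest strand going straight down or left to right, wrapping around cyclically (columns mod $n$). Weights: process top balls in decreasing order of label, ties broken right to left. For a nontrivial pairing $p$ joining a top ball of label $a$ in column $j$ to a bottom ball in column $j'$, the free balls for $p$ are the bottom-row balls not matched before $p$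 (excluding bottom balls of label $a$ that are trivially paired); $\mathrm{free}(p)$ is their number, and $\mathrm{skipped}(p)$ is the number of free balls in columns $j+1,\dots,j'-1$ (mod $n$). Set $\mathrm{wt}(p)=\frac{(1-t)t^{\mathrm{skipped}(p)}}{1-q^{a-1}t^{\mathrm{free}(p)}}q^{a-1}$ if $j'<j$ and $\frac{(1-t)t^{\mathrm{skipped}(p)}}{1-q^{a-1}t^{\mathrm{free}(p)}}$ if $j'>j$. Then $a^\nu_\mu=\sum_{Q\in\mathcal{Q}^\nu_\mu}\prod_{p\text{ nontrivial}}\mathrm{wt}(p)$ (zero if $\mathcal{Q}^\nu_\mu$ is empty), and $a^\nu_\mu|_{q=1}$ is its specialization at $q=1$. *)

theory Defs
  imports Main "HOL-Library.FuncSet" "HOL-Library.Multiset"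
    "HOL-Computational_Algebra.Polynomial" "HOL-Computational_Algebra.Fraction_Field"
begin

(* Columns are indexed 0..n-1 (the paper uses 1..n); vectors in N^n are nat lists of length n. *)

definition rearrangements :: "nat list \<Rightarrow> nat list set" where
  "rearrangements lam = {mu. mset mu = mset lam}"

definition supp :: "nat list \<Rightarrow> nat set" where
  "supp mu = {i. i < length mu \<and> mu ! i > 0}"

definition valid_2lq :: "nat list \<Rightarrow> nat list \<Rightarrow> bool" where
  "valid_2lq nu mu \<longleftrightarrow> length nu = length mu \<and> 1 \<notin> set nu
     \<and> (\<forall>j>1. card {i. i < length mu \<and> mu ! i = j} = card {i. i < length nu \<and> nu ! i = j})
     \<and> (\<forall>i<length nu. mu ! i = 0 \<or> nu ! i \<le> mu ! i)"

definition top_cols :: "nat list \<Rightarrow> nat set" where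
  "top_cols nu = {i. i < length nu \<and> nu ! i > 0}"

(* generalized two-line queues: pairings sigma (top column \<mapsto> bottom column) *)
definition queues :: "nat list \<Rightarrow> nat list \<Rightarrow> (nat \<Rightarrow> nat) set" where
  "queues nu mu = {\<sigma> \<in> top_cols nu \<rightarrow>\<^sub>E {..<length mu}.
      inj_on \<sigma> (top_cols nu)
      \<and> (\<forall>i\<in>top_cols nu. mu ! (\<sigma> i) = nu ! i)
      \<and> (\<forall>i\<in>top_cols nu. nu ! i = mu ! i \<longrightarrow> \<sigma> i = i)}"

definition before :: "nat list \<Rightarrow> nat \<Rightarrow> nat \<Rightarrow> bool" where
  "before nu i j \<longleftrightarrow> nu ! i > nu ! j \<or> (nu ! i = nu ! j \<and> i > j)"

definition free_balls :: "nat list \<Rightarrow> nat list \<Rightarrow> (nat \<Rightarrow> nat) \<Rightarrow> nat \<Rightarrow> nat set" where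
  "free_balls nu mu \<sigma> j = {b. b < length mu \<and> mu ! b > 0
      \<and> b \<notin> \<sigma> ` {i \<in> top_cols nu. before nu i j}
      \<and> \<not> (mu ! b = nu ! j \<and> nu ! b = mu ! b)}"

definition cyc_between :: "nat \<Rightarrow> nat \<Rightarrow> nat \<Rightarrow> nat set" where
  "cyc_between n j j' = {(j + k) mod n | k. 0 < k \<and> k < (j' + n - j) mod n}"

definition skipped :: "nat list \<Rightarrow> nat list \<Rightarrow> (nat \<Rightarrow> nat) \<Rightarrow> nat \<Rightarrow> nat" where
  "skipped nu mu \<sigma> j = card (free_balls nu mu \<sigma> j \<inter> cyc_between (length mu) j (\<sigma> j))"

definition pair_wt :: "'k::field \<Rightarrow> 'k \<Rightarrow> nat list \<Rightarrow> nat list \<Rightarrow> (nat \<Rightarrow> nat) \<Rightarrow> nat \<Rightarrow> 'k" where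
  "pair_wt q t nu mu \<sigma> j =
     (1 - t) * t ^ skipped nu mu \<sigma> j
       / (1 - q ^ (nu ! j - 1) * t ^ card (free_balls nu mu \<sigma> j))
     * (if \<sigma> j < j then q ^ (nu ! j - 1) else 1)"

definition queue_wt :: "'k::field \<Rightarrow> 'k \<Rightarrow> nat list \<Rightarrow> nat list \<Rightarrow> (nat \<Rightarrow> nat) \<Rightarrow> 'k" where
  "queue_wt q t nu mu \<sigma> = (\<Prod>j\<in>{j \<in> top_cols nu. \<sigma> j \<noteq> j}. pair_wt q t nu mu \<sigma> j)"

definition a_coef :: "'k::field \<Rightarrow> 'k \<Rightarrow> nat list \<Rightarrow> nat list \<Rightarrow> 'k" where
  "a_coef q t nu mu = (if valid_2lq nu mu then (\<Sum>\<sigma>\<in>queues nu mu. queue_wt q t nu mu \<sigma>) else 0)"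

definition tvar :: "rat poly fract" where
  "tvar = Fract [:0, 1:] 1"

definition a_coef_q1 :: "nat list \<Rightarrow> nat list \<Rightarrow> rat poly fract" where
  "a_coef_q1 nu mu = a_coef 1 tvar nu mu"

end

theory Submission
  imports Defs
begin

lemma tvar_pow: "tvar ^ k = Fract (monom 1 k) 1"
  by (induct k) (simp_all add: tvar_def One_fract_def monom_Suc  mult.commute)

lemma tvar_pow_ne1: "k > 0 \<Longrightarrow> tvar ^ k \<noteq> 1"
proof
  assume k: "k > 0" and h: "tvar ^ k = 1"
  then have "monom (1::rat) k = 1" by (simp add: tvar_pow One_fract_def eq_fract)
  then have "degree (monom (1::rat) k) = degree (1::rat poly)" by simp
  with k show False by (simp add: degree_monom_eq)
qed

lemma tvar_ne1: "tvar \<noteq> 1"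
  using tvar_pow_ne1[of 1] by simp

lemma modsub: "(j::nat) < n \<Longrightarrow> x < n \<Longrightarrow> (x + n - j) mod n = (if j \<le> x then x - j else x + n - j)"
proof (cases "j \<le> x")
  case True
  assume a: "j < n" "x < n"
  have "x + n - j = (x - j) + n" using True by linarith
  then have "(x + n - j) mod n = (x - j) mod n" by simp
  also have "\<dots> = x - j" using a by simp
  finally show ?thesis using True by simp
next
  case False
  assume a: "j < n" "x < n"
  then show ?thesis using False by simp
qed

lemma modadd: "(j::nat) < n \<Longrightarrow> k < n \<Longrightarrow> (j + k) mod n = (if j + k < n then j + k else j + k - n)"
proof (cases "j + k < n")
  case False
  assume a: "j < n" "k < n"
  have "(j + k) mod n = (j + k - n) mod n" using False by (intro le_mod_geq) simp
  also have "\<dots> = j + k - n" using a by simp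
  finally show ?thesis using False by simp
qed simp

lemma cyc_mem:
  assumes "j < n" "x < n"
  shows "x \<in> cyc_between n j c \<longleftrightarrow> 0 < (x + n - j) mod n \<and> (x + n - j) mod n < (c + n - j) mod n"
proof
  assume "x \<in> cyc_between n j c"
  then obtain k where k: "x = (j + k) mod n" "0 < k" "k < (c + n - j) mod n"
    unfolding cyc_between_def by auto
  have "(c + n - j) mod n < n" using assms by simp
  then have kn: "k < n" using k(3) by linarith
  have "(x + n - j) mod n = k"
    using k(1) kn assms by (simp add: modadd modsub) arith
  then show "0 < (x + n - j) mod n \<and> (x + n - j) mod n < (c + n - j) mod n" using k by simp
next
  assume h: "0 < (x + n - j) mod n \<and> (x + n - j) mod n < (c + n - j) mod n"
  have "(j + (x + n - j) mod n) mod n = x"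
    using assms by (simp add: modadd modsub)
  then show "x \<in> cyc_between n j c" unfolding cyc_between_def using h
    by (auto intro!: exI[of _ "(x + n - j) mod n"])
qed

lemma cyc_sub: "0 < n \<Longrightarrow> cyc_between n j c \<subseteq> {..<n}"
  unfolding cyc_between_def by auto

lemma geo:
  fixes F :: "nat set"
  assumes fin: "finite F" and ne: "F \<noteq> {}" and Fn: "F \<subseteq> {..<n}" and jn: "j < n" and jF: "j \<notin> F"
  shows "(\<Sum>c\<in>F. (1 - tvar) * tvar ^ card (F \<inter> cyc_between n j c) / (1 - tvar ^ card F)) = 1"
proof -
  define d where "d c = (c + n - j) mod n" for c
  define r where "r c = card (F \<inter> cyc_between n j c)" for c
  have n0: "0 < n" using jn by simp
  have dinv: "(j + d c) mod n = c" if "c < n" for c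
    using that jn unfolding d_def by (simp add: modadd modsub)
  have dpos: "0 < d c" if "c \<in> F" for c
  proof (rule ccontr)
    assume "\<not> 0 < d c"
    then have "d c = 0" by simp
    then have "c = j" using dinv[of c] that Fn jn by auto
    then show False using that jF by simp
  qed
  have mem: "x \<in> cyc_between n j c \<longleftrightarrow> 0 < d x \<and> d x < d c" if "x < n" for x c
    using cyc_mem[OF jn that] unfolding d_def by simp
  have lt: "r c < r c'" if "c \<in> F" "c' \<in> F" "d c < d c'" for c c'
  proof -
    have "F \<inter> cyc_between n j c \<subset> F \<inter> cyc_between n j c'"
    proof
      show "F \<inter> cyc_between n j c \<subseteq> F \<inter> cyc_between n j c'"
      proof
        fix x assume x: "x \<in> F \<inter> cyc_between n j c"
        then have xn: "x < n" using Fn by auto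
        then have "0 < d x \<and> d x < d c" using mem x by auto
        then show "x \<in> F \<inter> cyc_between n j c'" using mem[OF xn] x that(3) by auto
      qed
      have "c \<in> F \<inter> cyc_between n j c'" "c \<notin> F \<inter> cyc_between n j c"
        using mem[of c] that Fn dpos by auto
      then show "F \<inter> cyc_between n j c \<noteq> F \<inter> cyc_between n j c'" by blast
    qed
    then show ?thesis unfolding r_def by (simp add: fin psubset_card_mono)
  qed
  have inj: "inj_on r F"
  proof
    fix c c' assume c: "c \<in> F" "c' \<in> F" "r c = r c'"
    show "c = c'"
    proof (rule ccontr)
      assume "c \<noteq> c'"
      then have "d c \<noteq> d c'" using dinv c Fn by (metis lessThan_iff subsetD)
      then show False using lt c by (metis less_irrefl nat_neq_iff)
    qed
  qed
  have rlt: "r c < card F" if "c \<in> F" for c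
  proof -
    have "F \<inter> cyc_between n j c \<subseteq> F - {c}" using mem[of c c] that Fn by auto
    then have "r c \<le> card (F - {c})" unfolding r_def by (simp add: card_mono fin)
    moreover have "card F > 0" using that fin by (auto simp: card_gt_0_iff)
    ultimately show ?thesis using that fin by simp
  qed
  have img: "r ` F = {..<card F}"
    by (rule card_subset_eq) (use rlt inj in \<open>auto simp: card_image\<close>)
  have "(\<Sum>c\<in>F. tvar ^ r c) = (\<Sum>k<card F. tvar ^ k)"
    using sum.reindex[OF inj, of "\<lambda>k. tvar ^ k"] img by simp
  also have "\<dots> = (1 - tvar ^ card F) / (1 - tvar)"
    by (simp add: sum_gp_strict tvar_ne1)
  finally have s: "(\<Sum>c\<in>F. tvar ^ r c) = (1 - tvar ^ card F) / (1 - tvar)" .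
  have cF: "card F > 0" using fin ne by (simp add: card_gt_0_iff)
  have a: "1 - tvar \<noteq> 0" "1 - tvar ^ card F \<noteq> 0" using tvar_ne1 tvar_pow_ne1[OF cF] by auto
  have "(\<Sum>c\<in>F. (1 - tvar) * tvar ^ r c / (1 - tvar ^ card F))
      = (1 - tvar) / (1 - tvar ^ card F) * (\<Sum>c\<in>F. tvar ^ r c)"
    by (simp add: sum_distrib_left sum_divide_distrib)
  also have "\<dots> = 1" using s a by simp
  finally show ?thesis unfolding r_def .
qed


lemma before_irrefl: "\<not> before nu i i" by (simp add: before_def)
lemma before_trans: "before nu i j \<Longrightarrow> before nu j k \<Longrightarrow> before nu i k" by (auto simp: before_def)
lemma before_asym: "before nu i j \<Longrightarrow> \<not> before nu j i" by (auto simp: before_def)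
lemma before_total: "i \<noteq> j \<Longrightarrow> before nu i j \<or> before nu j i" by (auto simp: before_def)

lemma before_key:
  assumes "i < length nu" "j < length nu" "nu ! i * length nu + i < nu ! j * length nu + j"
  shows "before nu j i"
proof -
  let ?n = "length nu"
  have "\<not> nu ! j < nu ! i"
  proof
    assume h: "nu ! j < nu ! i"
    then have "(nu ! j + 1) * ?n \<le> nu ! i * ?n" by (intro mult_le_mono1) simp
    then show False using assms by simp
  qed
  then show ?thesis using assms unfolding before_def by auto
qed

locale L =
  fixes nu :: "nat list" and S :: "nat set"
  assumes S_sub: "S \<subseteq> {..<length nu}"
    and card_le: "card (top_cols nu) \<le> card S"
begin

abbreviation "T \<equiv> top_cols nu"
definition E where "E \<sigma> j = \<sigma> ` {i \<in> T. before nu i j}"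
definition triv where "triv \<sigma> j \<longleftrightarrow> j \<in> S \<and> j \<notin> E \<sigma> j"
definition F where "F \<sigma> j = {b \<in> S - E \<sigma> j. nu ! b < nu ! j}"
definition ch where "ch \<sigma> j = (if triv \<sigma> j then {j} else F \<sigma> j)"
definition Q where "Q = {\<sigma> \<in> T \<rightarrow>\<^sub>E {..<length nu}. \<forall>j\<in>T. \<sigma> j \<in> ch \<sigma> j}"
definition wt where "wt \<sigma> j = (1 - tvar) * tvar ^ card (F \<sigma> j \<inter> cyc_between (length nu) j (\<sigma> j))
   / (1 - tvar ^ card (F \<sigma> j))"
definition P where "P \<sigma> D = (\<Prod>j\<in>T - D. if triv \<sigma> j then 1 else wt \<sigma> j)"

lemma T_sub: "T \<subseteq> {..<length nu}" unfolding top_cols_def by auto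
lemma T_fin: "finite T" using T_sub finite_subset by blast
lemma S_fin: "finite S" using S_sub finite_subset by blast

lemma E_cong: "(\<And>i. i \<in> T \<Longrightarrow> before nu i j \<Longrightarrow> \<sigma> i = \<sigma>' i) \<Longrightarrow> E \<sigma> j = E \<sigma>' j"
  unfolding E_def by (rule image_cong) auto
lemma triv_cong: "(\<And>i. i \<in> T \<Longrightarrow> before nu i j \<Longrightarrow> \<sigma> i = \<sigma>' i) \<Longrightarrow> triv \<sigma> j = triv \<sigma>' j"
  unfolding triv_def using E_cong by metis
lemma F_cong: "(\<And>i. i \<in> T \<Longrightarrow> before nu i j \<Longrightarrow> \<sigma> i = \<sigma>' i) \<Longrightarrow> F \<sigma> j = F \<sigma>' j"
  unfolding F_def using E_cong by metis
lemma ch_cong: "(\<And>i. i \<in> T \<Longrightarrow> before nu i j \<Longrightarrow> \<sigma> i = \<sigma>' i) \<Longrightarrow> ch \<sigma> j = ch \<sigma>' j"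
  unfolding ch_def using triv_cong F_cong by metis

lemma F_sub: "F \<sigma> j \<subseteq> S" unfolding F_def by auto
lemma ch_sub: "j \<in> T \<Longrightarrow> ch \<sigma> j \<subseteq> {..<length nu}"
  unfolding ch_def using F_sub S_sub T_sub by auto
lemma ch_fin: "j \<in> T \<Longrightarrow> finite (ch \<sigma> j)"
  using ch_sub finite_subset by blast

lemma Q_fin: "finite Q"
proof -
  have "Q \<subseteq> T \<rightarrow>\<^sub>E {..<length nu}" unfolding Q_def by auto
  then show ?thesis using T_fin finite_PiE finite_subset by (metis finite_lessThan)
qed

lemma F_nonempty:
  assumes D: "D \<subseteq> T" "\<forall>i\<in>D. \<forall>i'\<in>T. before nu i' i \<longrightarrow> i' \<in> D" "\<forall>i\<in>D. \<rho> i \<in> ch \<rho> i"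
    and j: "j \<in> T - D" and Dj: "{i \<in> T. before nu i j} = D" and nt: "\<not> triv \<rho> j"
  shows "F \<rho> j \<noteq> {}"
proof -
  have EjD: "E \<rho> j = \<rho> ` D" unfolding E_def Dj ..
  have sub: "S - E \<rho> j - F \<rho> j \<subseteq> T - D - {j}"
  proof
    fix b assume b: "b \<in> S - E \<rho> j - F \<rho> j"
    then have bS: "b \<in> S" and bE: "b \<notin> E \<rho> j" and ge: "nu ! j \<le> nu ! b"
      unfolding F_def by auto
    have "nu ! j > 0" using j unfolding top_cols_def by auto
    then have bT: "b \<in> T" using ge bS S_sub unfolding top_cols_def by auto
    have "b \<noteq> j" using nt bS bE unfolding triv_def by auto
    moreover have "b \<notin> D"
    proof
      assume bD: "b \<in> D"
      then have bj: "before nu b j" using Dj by auto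
      have "\<rho> b \<in> ch \<rho> b" using D(3) bD by auto
      show False
      proof (cases "triv \<rho> b")
        case True
        then have "\<rho> b = b" using \<open>\<rho> b \<in> ch \<rho> b\<close> unfolding ch_def by auto
        then have "b \<in> E \<rho> j" using bD EjD by (metis image_eqI)
        then show False using bE by simp
      next
        case False
        then have "b \<in> E \<rho> b" using bS unfolding triv_def by auto
        then obtain i where "i \<in> T" "before nu i b" "b = \<rho> i" unfolding E_def by auto
        then have "b \<in> E \<rho> j" unfolding E_def using bj before_trans by blast
        then show False using bE by simp
      qed
    qed
    ultimately show "b \<in> T - D - {j}" using bT by auto
  qed
  have c1: "card (S - E \<rho> j - F \<rho> j) \<le> card (T - D) - 1"
    using card_mono[OF _ sub] T_fin j by auto
  have c2: "card (S - E \<rho> j) \<le> card (F \<rho> j) + card (S - E \<rho> j - F \<rho> j)"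
  proof -
    have "S - E \<rho> j \<subseteq> F \<rho> j \<union> (S - E \<rho> j - F \<rho> j)" by auto
    then have "card (S - E \<rho> j) \<le> card (F \<rho> j \<union> (S - E \<rho> j - F \<rho> j))"
      using S_fin F_sub by (intro card_mono) (auto intro: finite_subset)
    also have "\<dots> \<le> card (F \<rho> j) + card (S - E \<rho> j - F \<rho> j)" by (rule card_Un_le)
    finally show ?thesis .
  qed
  have c3: "card S \<le> card (S - E \<rho> j) + card (E \<rho> j)"
  proof -
    have "card S \<le> card ((S - E \<rho> j) \<union> E \<rho> j)"
      using S_fin T_fin D(1) EjD by (intro card_mono) (auto intro: finite_subset)
    also have "\<dots> \<le> card (S - E \<rho> j) + card (E \<rho> j)" by (rule card_Un_le)
    finally show ?thesis .
  qed
  have c4: "card (E \<rho> j) \<le> card D" unfolding EjD by (rule card_image_le) (use T_fin D(1) finite_subset in blast)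
  have c5: "card (T - D) = card T - card D" using D(1) T_fin by (simp add: card_Diff_subset finite_subset)
  have c6: "card D < card T" using D(1) j T_fin by (metis DiffD1 DiffD2 psubsetI psubset_card_mono)
  have "card (F \<rho> j) \<ge> 1" using c1 c2 c3 c4 c5 c6 card_le by linarith
  then show ?thesis by auto
qed

lemma pick_first:
  assumes "A \<subseteq> T" "A \<noteq> {}"
  obtains j where "j \<in> A" "\<And>i. i \<in> A \<Longrightarrow> i \<noteq> j \<Longrightarrow> before nu j i"
proof -
  define key where "key i = nu ! i * length nu + i" for i
  have fA: "finite A" using assms T_fin finite_subset by blast
  have "Max (key ` A) \<in> key ` A" using fA assms(2) by (intro Max_in) auto
  then obtain j where j: "j \<in> A" "key j = Max (key ` A)" by auto
  have "before nu j i" if "i \<in> A" "i \<noteq> j" for i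
  proof -
    have le: "key i \<le> key j" using j fA that by simp
    have in_: "i < length nu" "j < length nu" using that j assms T_sub by auto
    have "key i \<noteq> key j"
    proof
      assume "key i = key j"
      then have "(nu ! i * length nu + i) mod length nu = (nu ! j * length nu + j) mod length nu"
        unfolding key_def by simp
      then show False using in_ that by simp
    qed
    then show ?thesis using before_key[OF in_] le unfolding key_def by simp
  qed
  then show ?thesis using that j by blast
qed

lemma main_ind:
  assumes "D \<subseteq> T" "\<forall>i\<in>D. \<forall>i'\<in>T. before nu i' i \<longrightarrow> i' \<in> D" "\<forall>j\<in>D. \<rho> j \<in> ch \<rho> j"
  shows "(\<Sum>\<sigma>\<in>{\<sigma>\<in>Q. \<forall>j\<in>D. \<sigma> j = \<rho> j}. P \<sigma> D) = 1"
  using assms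
proof (induction "card (T - D)" arbitrary: D \<rho>)
  case 0
  then have DT: "D = T" using T_fin by auto
  let ?\<sigma> = "restrict \<rho> T"
  have chr: "ch ?\<sigma> j = ch \<rho> j" for j by (rule ch_cong) simp
  have lt: "\<rho> x < length nu" if "x \<in> T" for x
    using 0 DT ch_sub[OF that, of \<rho>] that by auto
  have inQ: "?\<sigma> \<in> Q"
    unfolding Q_def using 0 DT chr lt by (auto simp: PiE_def)
  have set: "{\<sigma>\<in>Q. \<forall>j\<in>D. \<sigma> j = \<rho> j} = {?\<sigma>}"
  proof (rule set_eqI, rule iffI)
    fix \<sigma> assume "\<sigma> \<in> {\<sigma>\<in>Q. \<forall>j\<in>D. \<sigma> j = \<rho> j}"
    then have "\<sigma> \<in> T \<rightarrow>\<^sub>E {..<length nu}" "\<forall>j\<in>T. \<sigma> j = \<rho> j" using DT unfolding Q_def by auto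
    then have "\<sigma> = ?\<sigma>" by (auto simp: fun_eq_iff PiE_def extensional_def)
    then show "\<sigma> \<in> {?\<sigma>}" by simp
  qed (use inQ DT in auto)
  show ?case unfolding set P_def using DT by simp
next
  case (Suc m)
  have ne: "T - D \<noteq> {}" using Suc.hyps(2) by (metis card.empty nat.distinct(1))
  obtain j where j: "j \<in> T - D" and first: "\<And>i. i \<in> T - D \<Longrightarrow> i \<noteq> j \<Longrightarrow> before nu j i"
    using pick_first[of "T - D"] ne by blast
  have Dj: "{i \<in> T. before nu i j} = D"
  proof (rule set_eqI, rule iffI)
    fix i assume "i \<in> {i \<in> T. before nu i j}"
    then show "i \<in> D" using first before_asym by blast
  next
    fix i assume iD: "i \<in> D"
    then have "i \<noteq> j" using j by auto
    then have "before nu i j \<or> before nu j i" by (rule before_total)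
    moreover have "\<not> before nu j i" using Suc.prems(2) iD j by auto
    ultimately show "i \<in> {i \<in> T. before nu i j}" using iD Suc.prems(1) by auto
  qed
  define A where "A = {\<sigma>\<in>Q. \<forall>j\<in>D. \<sigma> j = \<rho> j}"
  define B where "B c = {\<sigma>\<in>Q. \<forall>i\<in>insert j D. \<sigma> i = (\<rho>(j := c)) i}" for c
  define g where "g c = (1 - tvar) * tvar ^ card (F \<rho> j \<inter> cyc_between (length nu) j c)
        / (1 - tvar ^ card (F \<rho> j))" for c
  define h where "h c = (if triv \<rho> j then 1 else g c)" for c
  have agree: "\<And>i. i \<in> T \<Longrightarrow> before nu i j \<Longrightarrow> \<sigma> i = \<rho> i" if "\<sigma> \<in> A" for \<sigma>
    using that Dj unfolding A_def by auto
  have fA: "finite A" unfolding A_def using Q_fin by simp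
  have img: "(\<lambda>\<sigma>. \<sigma> j) ` A \<subseteq> ch \<rho> j"
  proof
    fix x assume "x \<in> (\<lambda>\<sigma>. \<sigma> j) ` A"
    then obtain \<sigma> where s: "\<sigma> \<in> A" "x = \<sigma> j" by auto
    then have "\<sigma> j \<in> ch \<sigma> j" using j unfolding A_def Q_def by auto
    then show "x \<in> ch \<rho> j" using s ch_cong[of j \<sigma> \<rho>] agree[OF s(1)] by simp
  qed
  have "(\<Sum>\<sigma>\<in>A. P \<sigma> D) = (\<Sum>c\<in>ch \<rho> j. \<Sum>\<sigma>\<in>{\<sigma> \<in> A. \<sigma> j = c}. P \<sigma> D)"
    using sum.group[OF fA ch_fin[of j \<rho>] img, of "\<lambda>\<sigma>. P \<sigma> D"] j by simp
  also have "\<dots> = (\<Sum>c\<in>ch \<rho> j. h c)"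
  proof (rule sum.cong[OF refl])
    fix c assume c: "c \<in> ch \<rho> j"
    have Beq: "{\<sigma> \<in> A. \<sigma> j = c} = B c"
      unfolding A_def B_def using j by auto
    have Peq: "P \<sigma> D = h c * P \<sigma> (insert j D)" if "\<sigma> \<in> B c" for \<sigma>
    proof -
      have sA: "\<sigma> \<in> A" and sj: "\<sigma> j = c" using that Beq by auto
      have tr: "triv \<sigma> j = triv \<rho> j" using triv_cong agree[OF sA] by metis
      have fr: "F \<sigma> j = F \<rho> j" using F_cong agree[OF sA] by metis
      have "P \<sigma> D = (if triv \<sigma> j then 1 else wt \<sigma> j) *
            (\<Prod>i\<in>T - D - {j}. if triv \<sigma> i then 1 else wt \<sigma> i)"
        unfolding P_def using j T_fin by (simp add: prod.remove)
      also have "T - D - {j} = T - insert j D" by auto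
      finally show ?thesis unfolding P_def h_def g_def using tr fr sj by (simp add: wt_def)
    qed
    have IH: "(\<Sum>\<sigma>\<in>B c. P \<sigma> (insert j D)) = 1"
      unfolding B_def
    proof (rule Suc.hyps(1))
      show "m = card (T - insert j D)"
        using Suc.hyps(2) j T_fin by (metis Diff_insert card_Diff_singleton diff_Suc_1)
      show "insert j D \<subseteq> T" using j Suc.prems(1) by auto
      show "\<forall>i\<in>insert j D. \<forall>i'\<in>T. before nu i' i \<longrightarrow> i' \<in> insert j D"
        using Suc.prems(2) Dj by auto
      show "\<forall>i\<in>insert j D. (\<rho>(j := c)) i \<in> ch (\<rho>(j := c)) i"
      proof
        fix i assume i: "i \<in> insert j D"
        show "(\<rho>(j := c)) i \<in> ch (\<rho>(j := c)) i"
        proof (cases "i = j")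
          case True
          have "ch (\<rho>(j := c)) j = ch \<rho> j" by (rule ch_cong) (use before_irrefl in auto)
          then show ?thesis using True c by simp
        next
          case False
          then have iD: "i \<in> D" using i by auto
          have "ch (\<rho>(j := c)) i = ch \<rho> i"
          proof (rule ch_cong)
            fix i' assume "i' \<in> T" "before nu i' i"
            then have "i' \<in> D" using Suc.prems(2) iD by auto
            then show "(\<rho>(j := c)) i' = \<rho> i'" using j by auto
          qed
          then show ?thesis using False iD Suc.prems(3) by simp
        qed
      qed
    qed
    have "(\<Sum>\<sigma>\<in>{\<sigma> \<in> A. \<sigma> j = c}. P \<sigma> D) = (\<Sum>\<sigma>\<in>B c. h c * P \<sigma> (insert j D))"
      unfolding Beq by (rule sum.cong[OF refl]) (rule Peq)
    also have "\<dots> = h c" using IH by (simp add: sum_distrib_left[symmetric])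
    finally show "(\<Sum>\<sigma>\<in>{\<sigma> \<in> A. \<sigma> j = c}. P \<sigma> D) = h c" .
  qed
  also have "\<dots> = 1"
  proof (cases "triv \<rho> j")
    case True
    then show ?thesis unfolding h_def ch_def by simp
  next
    case False
    have Fne: "F \<rho> j \<noteq> {}"
      by (rule F_nonempty[OF Suc.prems j Dj False])
    have jn: "j < length nu" using j T_sub by auto
    have "(\<Sum>c\<in>F \<rho> j. g c) = 1" unfolding g_def
      by (rule geo) (use Fne F_sub S_fin S_sub jn finite_subset in \<open>auto simp: F_def\<close>)
    then show ?thesis using False unfolding h_def ch_def by simp
  qed
  finally show ?case unfolding A_def .
qed

end


locale L2 = L +
  assumes no1: "1 \<notin> set nu"
begin

definition muOf where
  "muOf \<sigma> = map (\<lambda>b. if b \<in> \<sigma> ` T then nu ! (inv_into T \<sigma> b) else if b \<in> S then 1 else 0) [0..<length nu]"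

lemma nu_ne1: "i < length nu \<Longrightarrow> nu ! i \<noteq> 1" using no1 by (metis nth_mem)

lemma muOf_len: "length (muOf \<sigma>) = length nu" unfolding muOf_def by simp
lemma muOf_nth: "b < length nu \<Longrightarrow> muOf \<sigma> ! b =
   (if b \<in> \<sigma> ` T then nu ! (inv_into T \<sigma> b) else if b \<in> S then 1 else 0)"
  unfolding muOf_def by simp

context
  fixes \<sigma> assumes sQ: "\<sigma> \<in> Q"
begin

lemma Q_ch: "j \<in> T \<Longrightarrow> \<sigma> j \<in> ch \<sigma> j" using sQ unfolding Q_def by auto
lemma Q_Pi: "\<sigma> \<in> T \<rightarrow>\<^sub>E {..<length nu}" using sQ unfolding Q_def by auto
lemma Q_S: assumes "j \<in> T" shows "\<sigma> j \<in> S"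
  using Q_ch[OF assms] F_sub[of \<sigma> j] unfolding ch_def triv_def by (auto split: if_splits)
lemma Q_triv: assumes "j \<in> T" "triv \<sigma> j" shows "\<sigma> j = j"
  using Q_ch[OF assms(1)] assms(2) unfolding ch_def by simp
lemma Q_ntriv: assumes "j \<in> T" "\<not> triv \<sigma> j" shows "\<sigma> j \<in> F \<sigma> j"
  using Q_ch[OF assms(1)] assms(2) unfolding ch_def by simp
lemma Q_ntriv_ne: assumes "j \<in> T" "\<not> triv \<sigma> j" shows "\<sigma> j \<noteq> j"
  using Q_ntriv[OF assms] unfolding F_def by auto

lemma Q_before_ne: assumes "i \<in> T" "i' \<in> T" "before nu i i'" shows "\<sigma> i \<noteq> \<sigma> i'"
proof
  assume eq: "\<sigma> i = \<sigma> i'"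
  have inE: "\<sigma> i \<in> E \<sigma> i'" unfolding E_def using assms by auto
  show False
  proof (cases "triv \<sigma> i'")
    case True
    then show False using Q_triv[OF assms(2) True] inE eq unfolding triv_def by simp
  next
    case False
    then show False using Q_ntriv[OF assms(2) False] inE eq unfolding F_def by simp
  qed
qed

lemma Q_inj: "inj_on \<sigma> T"
proof
  fix i i' assume "i \<in> T" "i' \<in> T" "\<sigma> i = \<sigma> i'"
  then show "i = i'" using Q_before_ne before_total by metis
qed

lemma mu_sigma: assumes "i \<in> T" shows "muOf \<sigma> ! (\<sigma> i) = nu ! i"
proof -
  have "\<sigma> i < length nu" using Q_S[OF assms] S_sub by auto
  then show ?thesis using assms Q_inj by (simp add: muOf_nth inv_into_f_f)
qed

lemma T_pos: "i \<in> T \<Longrightarrow> nu ! i > 0" unfolding top_cols_def by auto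

lemma mu_not_img: "b < length nu \<Longrightarrow> b \<notin> \<sigma> ` T \<Longrightarrow> muOf \<sigma> ! b = (if b \<in> S then 1 else 0)"
  by (simp add: muOf_nth)

lemma V4: assumes "b < length nu" shows "muOf \<sigma> ! b = 0 \<or> nu ! b \<le> muOf \<sigma> ! b"
proof (cases "b \<in> \<sigma> ` T")
  case True
  then obtain k where k: "k \<in> T" "b = \<sigma> k" by auto
  have "nu ! b \<le> nu ! k"
  proof (cases "triv \<sigma> k")
    case True then show ?thesis using Q_triv k by simp
  next
    case False then show ?thesis using Q_ntriv[OF k(1) False] k unfolding F_def by auto
  qed
  then show ?thesis using mu_sigma k by simp
next
  case False
  show ?thesis
  proof (cases "b \<in> S")
    case bS: True
    have "nu ! b = 0"
    proof (rule ccontr)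
      assume "nu ! b \<noteq> 0"
      then have bT: "b \<in> T" using assms unfolding top_cols_def by auto
      show False
      proof (cases "triv \<sigma> b")
        case True then show False using Q_triv[OF bT True] False bT by (metis image_eqI)
      next
        case nt: False
        then have "b \<in> E \<sigma> b" using bS unfolding triv_def by auto
        then show False using False unfolding E_def by auto
      qed
    qed
    then show ?thesis by simp
  next
    case False
    then show ?thesis using mu_not_img assms \<open>b \<notin> \<sigma> ` T\<close> by simp
  qed
qed

lemma img_T: "\<sigma> ` T \<subseteq> S" using Q_S by auto

lemma cnt_big: assumes "c > 1"
  shows "{b. b < length nu \<and> muOf \<sigma> ! b = c} = \<sigma> ` {i \<in> T. nu ! i = c}"
proof (rule set_eqI, rule iffI)
  fix b assume b: "b \<in> {b. b < length nu \<and> muOf \<sigma> ! b = c}"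
  then have "b \<in> \<sigma> ` T" using mu_not_img[of b] assms by (cases "b \<in> \<sigma> ` T") (auto split: if_splits)
  then obtain i where "i \<in> T" "b = \<sigma> i" by auto
  then show "b \<in> \<sigma> ` {i \<in> T. nu ! i = c}" using b mu_sigma by auto
next
  fix b assume "b \<in> \<sigma> ` {i \<in> T. nu ! i = c}"
  then obtain i where "i \<in> T" "nu ! i = c" "b = \<sigma> i" by auto
  then show "b \<in> {b. b < length nu \<and> muOf \<sigma> ! b = c}" using mu_sigma Q_S S_sub by auto
qed

lemma card_big: assumes "c > 1"
  shows "card {b. b < length nu \<and> muOf \<sigma> ! b = c} = card {i. i < length nu \<and> nu ! i = c}"
proof -
  have "{i \<in> T. nu ! i = c} = {i. i < length nu \<and> nu ! i = c}" using assms unfolding top_cols_def by auto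
  moreover have "inj_on \<sigma> {i \<in> T. nu ! i = c}" using Q_inj by (rule inj_on_subset) auto
  ultimately show ?thesis unfolding cnt_big[OF assms] by (simp add: card_image)
qed

lemma set_one: "{b. b < length nu \<and> muOf \<sigma> ! b = 1} = S - \<sigma> ` T"
proof (rule set_eqI, rule iffI)
  fix b assume b: "b \<in> {b. b < length nu \<and> muOf \<sigma> ! b = 1}"
  have "b \<notin> \<sigma> ` T"
  proof
    assume "b \<in> \<sigma> ` T"
    then obtain i where "i \<in> T" "b = \<sigma> i" by auto
    then show False using b mu_sigma nu_ne1 T_sub by auto
  qed
  moreover have "b < length nu" "muOf \<sigma> ! b = 1" using b by auto
  ultimately have "muOf \<sigma> ! b = (if b \<in> S then 1 else 0)" using mu_not_img by simp
  then have "b \<in> S" using \<open>muOf \<sigma> ! b = 1\<close> by (cases "b \<in> S") simp_all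
  then show "b \<in> S - \<sigma> ` T" using \<open>b \<notin> \<sigma> ` T\<close> by simp
next
  fix b assume b: "b \<in> S - \<sigma> ` T"
  then have bn: "b < length nu" using S_sub by auto
  then have "muOf \<sigma> ! b = 1" using mu_not_img[OF bn] b by simp
  then show "b \<in> {b. b < length nu \<and> muOf \<sigma> ! b = 1}" using bn by simp
qed

lemma set_zero: "{b. b < length nu \<and> muOf \<sigma> ! b = 0} = {..<length nu} - S"
proof (rule set_eqI, rule iffI)
  fix b assume b: "b \<in> {b. b < length nu \<and> muOf \<sigma> ! b = 0}"
  have "b \<notin> \<sigma> ` T"
  proof
    assume "b \<in> \<sigma> ` T"
    then obtain i where "i \<in> T" "b = \<sigma> i" by auto
    then show False using b mu_sigma[of i] T_pos[of i] by auto
  qed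
  moreover have "b < length nu" "muOf \<sigma> ! b = 0" using b by auto
  ultimately have "muOf \<sigma> ! b = (if b \<in> S then 1 else 0)" using mu_not_img by simp
  then have "b \<notin> S" using \<open>muOf \<sigma> ! b = 0\<close> by (cases "b \<in> S") simp_all
  then show "b \<in> {..<length nu} - S" using \<open>b < length nu\<close> by simp
next
  fix b assume b: "b \<in> {..<length nu} - S"
  then have "b \<notin> \<sigma> ` T" using img_T by auto
  then show "b \<in> {b. b < length nu \<and> muOf \<sigma> ! b = 0}" using mu_not_img[of b] b by auto
qed

lemma supp_mu: "supp (muOf \<sigma>) = S"
proof (rule set_eqI)
  fix b
  have "b \<in> supp (muOf \<sigma>) \<longleftrightarrow> b < length nu \<and> muOf \<sigma> ! b \<noteq> 0"
    unfolding supp_def muOf_len by auto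
  also have "\<dots> \<longleftrightarrow> b \<in> S"
  proof -
    have "b \<in> {b. b < length nu \<and> muOf \<sigma> ! b = 0} \<longleftrightarrow> b \<in> {..<length nu} - S"
      by (simp only: set_zero)
    then have "b < length nu \<and> muOf \<sigma> ! b = 0 \<longleftrightarrow> b \<in> {..<length nu} - S" by simp
    then show ?thesis using S_sub by auto
  qed
  finally show "b \<in> supp (muOf \<sigma>) \<longleftrightarrow> b \<in> S" .
qed

lemma valid_mu: "valid_2lq nu (muOf \<sigma>)"
  unfolding valid_2lq_def muOf_len
proof (intro conjI allI impI)
  show "1 \<notin> set nu" by (rule no1)
  show "card {i. i < length nu \<and> muOf \<sigma> ! i = j} = card {i. i < length nu \<and> nu ! i = j}" if "1 < j" for j
    using card_big[OF that] .
  show "muOf \<sigma> ! i = 0 \<or> nu ! i \<le> muOf \<sigma> ! i" if "i < length nu" for i using V4[OF that] .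
qed simp

lemma Q_queues: "\<sigma> \<in> queues nu (muOf \<sigma>)"
  unfolding queues_def
proof (intro CollectI conjI ballI impI)
  show "\<sigma> \<in> T \<rightarrow>\<^sub>E {..<length (muOf \<sigma>)}" using Q_Pi by (simp add: muOf_len)
  show "inj_on \<sigma> T" by (rule Q_inj)
  show "muOf \<sigma> ! (\<sigma> i) = nu ! i" if "i \<in> T" for i using mu_sigma that .
  fix i assume i: "i \<in> T" and eq: "nu ! i = muOf \<sigma> ! i"
  have iS: "i < length nu" using i T_sub by auto
  have "i \<in> \<sigma> ` T"
  proof (rule ccontr)
    assume "i \<notin> \<sigma> ` T"
    then have "muOf \<sigma> ! i \<le> 1" using mu_not_img[OF iS] by simp
    then show False using eq T_pos[OF i] nu_ne1[OF iS] by simp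
  qed
  then obtain k where k: "k \<in> T" "i = \<sigma> k" by auto
  show "\<sigma> i = i"
  proof (cases "triv \<sigma> k")
    case True then show ?thesis using Q_triv k by simp
  next
    case False
    then have "nu ! i < nu ! k" using Q_ntriv[OF k(1) False] k unfolding F_def by auto
    moreover have "muOf \<sigma> ! i = nu ! k" using mu_sigma k by simp
    ultimately show ?thesis using eq by simp
  qed
qed

lemma free_eq: assumes j: "j \<in> T" and nt: "\<not> triv \<sigma> j"
  shows "free_balls nu (muOf \<sigma>) \<sigma> j = F \<sigma> j"
proof (rule set_eqI, rule iffI)
  fix b assume "b \<in> F \<sigma> j"
  then have b: "b \<in> S" "b \<notin> E \<sigma> j" "nu ! b < nu ! j" unfolding F_def by auto
  have bn: "b < length nu" using b S_sub by auto
  have "muOf \<sigma> ! b > 0" using supp_mu b bn unfolding supp_def by (auto simp: muOf_len)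
  then show "b \<in> free_balls nu (muOf \<sigma>) \<sigma> j"
    unfolding free_balls_def using b bn by (auto simp: muOf_len E_def)
next
  fix b assume "b \<in> free_balls nu (muOf \<sigma>) \<sigma> j"
  then have b: "b < length nu" "muOf \<sigma> ! b > 0" "b \<notin> E \<sigma> j"
     "\<not> (muOf \<sigma> ! b = nu ! j \<and> nu ! b = muOf \<sigma> ! b)"
    unfolding free_balls_def E_def by (auto simp: muOf_len)
  have bS: "b \<in> S" using b supp_mu unfolding supp_def by (auto simp: muOf_len)
  have "nu ! b < nu ! j"
  proof (rule ccontr)
    assume ge: "\<not> nu ! b < nu ! j"
    have le: "nu ! b \<le> muOf \<sigma> ! b" using V4[OF b(1)] b(2) by simp
    show False
    proof (cases "b \<in> \<sigma> ` T")
      case True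
      then obtain k where k: "k \<in> T" "b = \<sigma> k" by auto
      have mk: "muOf \<sigma> ! b = nu ! k" using mu_sigma k by simp
      have "\<not> before nu k j" using b(3) k unfolding E_def by auto
      moreover have "k \<noteq> j" using Q_ntriv[OF j nt] k ge unfolding F_def by auto
      ultimately have "before nu j k" using before_total by blast
      then have "nu ! k \<le> nu ! j" unfolding before_def by auto
      then show False using b(4) mk le ge by simp
    next
      case False
      then have "muOf \<sigma> ! b = 1" using mu_not_img b bS by simp
      then show False using le ge T_pos[OF j] nu_ne1[OF b(1)] by simp
    qed
  qed
  then show "b \<in> F \<sigma> j" using bS b(3) unfolding F_def by auto
qed

lemma qwt: "queue_wt 1 tvar nu (muOf \<sigma>) \<sigma> = P \<sigma> {}"
proof -
  have set: "{j \<in> T. \<sigma> j \<noteq> j} = {j \<in> T. \<not> triv \<sigma> j}"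
    using Q_triv Q_ntriv_ne by blast
  have pw: "pair_wt 1 tvar nu (muOf \<sigma>) \<sigma> j = wt \<sigma> j" if "j \<in> T" "\<not> triv \<sigma> j" for j
    unfolding pair_wt_def wt_def skipped_def free_eq[OF that] by (simp add: muOf_len)
  have "queue_wt 1 tvar nu (muOf \<sigma>) \<sigma> = (\<Prod>j\<in>{j \<in> T. \<not> triv \<sigma> j}. wt \<sigma> j)"
    unfolding queue_wt_def set using pw by (intro prod.cong) auto
  also have "\<dots> = (\<Prod>j\<in>T. if \<not> triv \<sigma> j then wt \<sigma> j else 1)"
    using T_fin by (rule prod.inter_filter)
  also have "\<dots> = P \<sigma> {}" unfolding P_def by (intro prod.cong) auto
  finally show ?thesis .
qed

end

end


context L2
begin

lemma T_pos0: "i \<in> T \<Longrightarrow> nu ! i > 0" unfolding top_cols_def by auto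

lemma converse:
  assumes len: "length mu = length nu" and sm: "supp mu = S" and v: "valid_2lq nu mu"
    and q: "\<sigma> \<in> queues nu mu"
  shows "\<sigma> \<in> Q \<and> muOf \<sigma> = mu"
proof -
  have qq: "\<sigma> \<in> T \<rightarrow>\<^sub>E {..<length mu} \<and> inj_on \<sigma> T \<and> (\<forall>i\<in>T. mu ! (\<sigma> i) = nu ! i)
      \<and> (\<forall>i\<in>T. nu ! i = mu ! i \<longrightarrow> \<sigma> i = i)"
    using q unfolding queues_def by (rule CollectD)
  have Pi: "\<sigma> \<in> T \<rightarrow>\<^sub>E {..<length nu}" using qq len by simp
  have inj: "inj_on \<sigma> T" using qq by simp
  have lab: "\<And>i. i \<in> T \<Longrightarrow> mu ! (\<sigma> i) = nu ! i" using qq by simp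
  have tr: "\<And>i. i \<in> T \<Longrightarrow> nu ! i = mu ! i \<Longrightarrow> \<sigma> i = i" using qq by simp
  have vv: "length nu = length mu \<and> 1 \<notin> set nu
     \<and> (\<forall>j>1. card {i. i < length mu \<and> mu ! i = j} = card {i. i < length nu \<and> nu ! i = j})
     \<and> (\<forall>i<length nu. mu ! i = 0 \<or> nu ! i \<le> mu ! i)"
    using v unfolding valid_2lq_def .
  have cnt: "\<And>c. c > 1 \<Longrightarrow> card {i. i < length nu \<and> mu ! i = c} = card {i. i < length nu \<and> nu ! i = c}"
    using vv len by simp
  have ge: "\<And>i. i < length nu \<Longrightarrow> mu ! i = 0 \<or> nu ! i \<le> mu ! i"
    using vv by simp
  have Seq: "S = {i. i < length mu \<and> mu ! i > 0}" using sm unfolding supp_def by simp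
  have inS: "b \<in> S \<longleftrightarrow> b < length nu \<and> mu ! b > 0" for b
    unfolding Seq using len by simp
  have surj: "b \<in> \<sigma> ` {i \<in> T. nu ! i = c}" if c: "c > 1" and b: "b < length nu" "mu ! b = c" for b c
  proof -
    have sub: "\<sigma> ` {i \<in> T. nu ! i = c} \<subseteq> {i. i < length nu \<and> mu ! i = c}"
    proof
      fix b assume "b \<in> \<sigma> ` {i \<in> T. nu ! i = c}"
      then obtain i where i: "i \<in> T" "nu ! i = c" "b = \<sigma> i" by blast
      have "\<sigma> i < length nu" using Pi i(1) by (simp add: PiE_iff)
      then show "b \<in> {i. i < length nu \<and> mu ! i = c}" using lab[OF i(1)] i by simp
    qed
    have "{i \<in> T. nu ! i = c} = {i. i < length nu \<and> nu ! i = c}"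
      using c unfolding top_cols_def by auto
    moreover have "inj_on \<sigma> {i \<in> T. nu ! i = c}" using inj by (rule inj_on_subset) auto
    ultimately have "card (\<sigma> ` {i \<in> T. nu ! i = c}) = card {i. i < length mu \<and> mu ! i = c}"
      using cnt[OF c] len by (simp add: card_image)
    then have "\<sigma> ` {i \<in> T. nu ! i = c} = {i. i < length nu \<and> mu ! i = c}"
      using sub len by (intro card_subset_eq) auto
    then show ?thesis using b by auto
  qed
  have sS: "\<sigma> j \<in> S" if "j \<in> T" for j
  proof -
    have "\<sigma> j < length nu" using Pi that by (simp add: PiE_iff)
    moreover have "mu ! (\<sigma> j) > 0" using lab[OF that] T_pos0[OF that] by simp
    ultimately show ?thesis using inS by blast
  qed
  have chj: "\<sigma> j \<in> ch \<sigma> j" if j: "j \<in> T" for j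
  proof (cases "triv \<sigma> j")
    case True
    then have jS: "j \<in> S" and jE: "j \<notin> E \<sigma> j" unfolding triv_def by auto
    have jn: "j < length nu" and mj: "mu ! j > 0" using inS jS by auto
    have "nu ! j \<le> mu ! j" using ge[OF jn] mj by simp
    moreover have "\<not> nu ! j < mu ! j"
    proof
      assume lt: "nu ! j < mu ! j"
      have "nu ! j > 0" using j unfolding top_cols_def by auto
      then have "nu ! j \<ge> 2" using nu_ne1[OF jn] by simp
      then obtain k where k: "k \<in> T" "nu ! k = mu ! j" "j = \<sigma> k"
        using surj[of "mu ! j" j] lt jn by auto
      then have "before nu k j" using lt unfolding before_def by simp
      then have "j \<in> E \<sigma> j" using k unfolding E_def by auto
      then show False using jE by simp
    qed
    ultimately have "\<sigma> j = j" using tr[OF j] by simp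
    then show ?thesis using True unfolding ch_def by simp
  next
    case False
    have sjn: "\<sigma> j < length nu" using sS[OF j] S_sub by auto
    have ml: "mu ! (\<sigma> j) = nu ! j" using lab[OF j] .
    have notE: "\<sigma> j \<notin> E \<sigma> j"
    proof
      assume "\<sigma> j \<in> E \<sigma> j"
      then obtain i where "i \<in> T" "before nu i j" "\<sigma> i = \<sigma> j" unfolding E_def by auto
      then have "i = j" using inj j by (simp add: inj_on_eq_iff)
      then show False using \<open>before nu i j\<close> before_irrefl by simp
    qed
    have "nu ! (\<sigma> j) < nu ! j"
    proof (rule ccontr)
      assume "\<not> nu ! (\<sigma> j) < nu ! j"
      moreover have "nu ! (\<sigma> j) \<le> nu ! j" using ge[OF sjn] ml T_pos0[OF j] by auto
      ultimately have eq: "nu ! (\<sigma> j) = nu ! j" by simp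
      then have sT: "\<sigma> j \<in> T" using sjn T_pos0[OF j] unfolding top_cols_def by auto
      have "\<sigma> (\<sigma> j) = \<sigma> j" using tr[OF sT] eq ml by simp
      then have sjj: "\<sigma> j = j" using inj sT j by (simp add: inj_on_eq_iff)
      then have "triv \<sigma> j" using sS[OF j] notE unfolding triv_def by simp
      then show False using False by simp
    qed
    then show ?thesis using False sS[OF j] notE unfolding ch_def F_def by simp
  qed
  have sQ: "\<sigma> \<in> Q" unfolding Q_def using Pi chj by auto
  have "muOf \<sigma> = mu"
  proof (rule nth_equalityI)
    show "length (muOf \<sigma>) = length mu" using len muOf_len by simp
    fix b assume "b < length (muOf \<sigma>)"
    then have b: "b < length nu" using muOf_len by simp
    show "muOf \<sigma> ! b = mu ! b"
    proof (cases "b \<in> \<sigma> ` T")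
      case True
      then obtain i where i: "i \<in> T" "b = \<sigma> i" by auto
      then show ?thesis using mu_sigma[OF sQ i(1)] lab[OF i(1)] by simp
    next
      case False
      show ?thesis
      proof (cases "b \<in> S")
        case True
        have "mu ! b > 0" using True inS by auto
        moreover have "\<not> mu ! b > 1"
        proof
          assume "mu ! b > 1"
          then have "b \<in> \<sigma> ` {i \<in> T. nu ! i = mu ! b}" using surj b by auto
          then show False using False by auto
        qed
        ultimately have "mu ! b = 1" by simp
        then show ?thesis using mu_not_img[OF sQ b False] True by simp
      next
        case nS: False
        then have "mu ! b = 0" using inS b by auto
        then show ?thesis using mu_not_img[OF sQ b False] nS by simp
      qed
    qed
  qed
  then show ?thesis using sQ by simp
qed

end

lemma cardP: "card {i. i < length xs \<and> P (xs ! i)} = size (filter_mset P (mset xs))"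
  by (simp flip: length_filter_conv_card mset_filter)

lemma cnt_card: "count (mset xs) x = card {i. i < length xs \<and> xs ! i = x}"
proof -
  have "card {i. i < length xs \<and> xs ! i = x} = size (filter_mset (\<lambda>y. y = x) (mset xs))"
    by (rule cardP)
  also have "\<dots> = count (mset xs) x" by (simp add: filter_eq_replicate_mset)
  finally show ?thesis by simp
qed


lemma card_split1:
  fixes lam :: "nat list"
  shows "card {i. i < length lam \<and> lam ! i = 1} + card {i. i < length lam \<and> 1 < lam ! i}
       = card {i. i < length lam \<and> 0 < lam ! i}"
proof -
  have "{i. i < length lam \<and> 0 < lam ! i} = {i. i < length lam \<and> lam ! i = 1} \<union> {i. i < length lam \<and> 1 < lam ! i}"
    by auto
  moreover have "{i. i < length lam \<and> lam ! i = 1} \<inter> {i. i < length lam \<and> 1 < lam ! i} = {}" by auto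
  ultimately show ?thesis by (simp add: card_Un_disjoint)
qed

lemma card_split0:
  fixes lam :: "nat list"
  shows "card {i. i < length lam \<and> lam ! i = 0} + card {i. i < length lam \<and> 0 < lam ! i} = length lam"
proof -
  have "{..<length lam} = {i. i < length lam \<and> lam ! i = 0} \<union> {i. i < length lam \<and> 0 < lam ! i}"
    by auto
  moreover have "{i. i < length lam \<and> lam ! i = 0} \<inter> {i. i < length lam \<and> 0 < lam ! i} = {}" by auto
  ultimately have "card {..<length lam} = card {i. i < length lam \<and> lam ! i = 0} + card {i. i < length lam \<and> 0 < lam ! i}"
    by (simp add: card_Un_disjoint)
  then show ?thesis by simp
qed

theorem lemma7p3:
  fixes lam nu :: "nat list" and S :: "nat set" and n :: nat
  assumes "length lam = n"
    and "sorted_wrt (\<ge>) lam"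
    and "nu \<in> rearrangements (map (\<lambda>x. if x = 1 then 0 else x) lam)"
    and "S \<subseteq> {..<n}"
    and "card S = card (supp lam)"
  shows "(\<Sum>mu\<in>{mu \<in> rearrangements lam. supp mu = S}. a_coef_q1 nu mu) = 1"
proof -
  define g where "g x = (if x = 1 then 0 else x)" for x :: nat
  have mnu: "mset nu = mset (map g lam)" using assms(3) unfolding rearrangements_def g_def by simp
  have lnu: "length nu = n" using mset_eq_length[OF mnu] assms(1) by simp
  have no1: "1 \<notin> set nu" using mset_eq_setD[OF mnu] by (auto simp: g_def)
  have cP: "card {i. i < length nu \<and> P (nu ! i)} = card {i. i < n \<and> P (g (lam ! i))}" for P
  proof -
    have "card {i. i < length nu \<and> P (nu ! i)} = card {i. i < length (map g lam) \<and> P (map g lam ! i)}"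
      unfolding cardP mnu ..
    also have "\<dots> = card {i. i < n \<and> P (g (lam ! i))}"
      using assms(1) by (intro arg_cong[where f = card]) auto
    finally show ?thesis .
  qed
  have gpos: "0 < g y \<longleftrightarrow> 1 < y" for y unfolding g_def by auto
  have geq: "1 < c \<Longrightarrow> g y = c \<longleftrightarrow> y = c" for y c unfolding g_def by auto
  have cardT: "card (top_cols nu) = card {i. i < n \<and> 1 < lam ! i}"
    unfolding top_cols_def cP[of "\<lambda>x. 0 < x"] gpos ..
  have cardS: "card S = card {i. i < n \<and> 0 < lam ! i}"
    using assms(5,1) unfolding supp_def by simp
  have le: "card (top_cols nu) \<le> card S"
    unfolding cardT cardS by (rule card_mono) auto
  have Ssub: "S \<subseteq> {..<length nu}" using assms(4) lnu by simp
  interpret L2 nu S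
    by (rule L2.intro[OF L.intro[OF Ssub le] L2_axioms.intro[OF no1]])
  define M where "M = {mu \<in> rearrangements lam. supp mu = S}"
  have finM: "finite M"
  proof (rule finite_subset)
    show "M \<subseteq> {xs. set xs \<subseteq> set lam \<and> length xs = n}"
    proof
      fix xs assume "xs \<in> M"
      then have m: "mset xs = mset lam" unfolding M_def rearrangements_def by simp
      have "set xs = set lam" using mset_eq_setD[OF m] .
      moreover have "length xs = n" using mset_eq_length[OF m] assms(1) by simp
      ultimately show "xs \<in> {xs. set xs \<subseteq> set lam \<and> length xs = n}" by simp
    qed
    show "finite {xs. set xs \<subseteq> set lam \<and> length xs = n}" by (rule finite_lists_length_eq) simp
  qed
  have muM: "muOf \<sigma> \<in> M" if sQ: "\<sigma> \<in> Q" for \<sigma>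
  proof -
    have "mset (muOf \<sigma>) = mset lam"
    proof (rule multiset_eqI)
      fix x
      have lhs: "count (mset (muOf \<sigma>)) x = card {b. b < length nu \<and> muOf \<sigma> ! b = x}"
        unfolding cnt_card muOf_len ..
      have rhs: "count (mset lam) x = card {i. i < n \<and> lam ! i = x}"
        unfolding cnt_card assms(1) ..
      consider "x = 0" | "x = 1" | "x > 1" by linarith
      then show "count (mset (muOf \<sigma>)) x = count (mset lam) x"
      proof cases
        case 1
        have "card {b. b < length nu \<and> muOf \<sigma> ! b = x} = n - card S"
          unfolding 1 set_zero[OF sQ] using card_Diff_subset[OF S_fin assms(4)] lnu by simp
        moreover have "card {i. i < n \<and> lam ! i = x} = n - card S"
          using card_split0[of lam] unfolding 1 cardS assms(1) by simp
        ultimately show ?thesis unfolding lhs rhs by simp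
      next
        case 2
        have "card {b. b < length nu \<and> muOf \<sigma> ! b = x} = card S - card (top_cols nu)"
        proof -
          have "card (S - \<sigma> ` top_cols nu) = card S - card (\<sigma> ` top_cols nu)"
            using img_T[OF sQ] S_fin by (simp add: card_Diff_subset finite_subset)
          also have "card (\<sigma> ` top_cols nu) = card (top_cols nu)"
            using Q_inj[OF sQ] by (simp add: card_image)
          finally show ?thesis unfolding 2 set_one[OF sQ] .
        qed
        moreover have "card {i. i < n \<and> lam ! i = x} = card S - card (top_cols nu)"
          using card_split1[of lam] unfolding 2 cardS cardT assms(1) by simp
        ultimately show ?thesis unfolding lhs rhs by simp
      next
        case 3
        have "card {b. b < length nu \<and> muOf \<sigma> ! b = x} = card {i. i < length nu \<and> nu ! i = x}"
          using card_big[OF sQ 3] .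
        also have "\<dots> = card {i. i < n \<and> g (lam ! i) = x}" by (rule cP)
        also have "\<dots> = card {i. i < n \<and> lam ! i = x}" using geq[OF 3] by simp
        finally show ?thesis unfolding lhs rhs .
      qed
    qed
    then show ?thesis unfolding M_def rearrangements_def using supp_mu[OF sQ] by simp
  qed
  have inner: "a_coef_q1 nu mu = (\<Sum>\<sigma>\<in>{\<sigma> \<in> Q. muOf \<sigma> = mu}. queue_wt 1 tvar nu (muOf \<sigma>) \<sigma>)"
    if mM: "mu \<in> M" for mu
  proof -
    have m: "mset mu = mset lam" and smu: "supp mu = S" using mM unfolding M_def rearrangements_def by auto
    have lmu: "length mu = length nu" using mset_eq_length[OF m] lnu assms(1) by simp
    show ?thesis
    proof (cases "valid_2lq nu mu")
      case True
      have "queues nu mu = {\<sigma> \<in> Q. muOf \<sigma> = mu}"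
      proof (rule set_eqI, rule iffI)
        fix \<sigma> assume "\<sigma> \<in> queues nu mu"
        then show "\<sigma> \<in> {\<sigma> \<in> Q. muOf \<sigma> = mu}" using converse[OF lmu smu True] by simp
      next
        fix \<sigma> assume "\<sigma> \<in> {\<sigma> \<in> Q. muOf \<sigma> = mu}"
        then show "\<sigma> \<in> queues nu mu" using Q_queues by auto
      qed
      then have "(\<Sum>\<sigma>\<in>queues nu mu. queue_wt 1 tvar nu mu \<sigma>)
          = (\<Sum>\<sigma>\<in>{\<sigma> \<in> Q. muOf \<sigma> = mu}. queue_wt 1 tvar nu (muOf \<sigma>) \<sigma>)"
        by (intro sum.cong) auto
      then show ?thesis unfolding a_coef_q1_def a_coef_def using True by simp
    next
      case False
      have "\<sigma> \<notin> {\<sigma> \<in> Q. muOf \<sigma> = mu}" for \<sigma>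
      proof
        assume "\<sigma> \<in> {\<sigma> \<in> Q. muOf \<sigma> = mu}"
        then have "\<sigma> \<in> Q" "muOf \<sigma> = mu" by auto
        then show False using valid_mu[of \<sigma>] False by simp
      qed
      then have e: "{\<sigma> \<in> Q. muOf \<sigma> = mu} = {}" by blast
      show ?thesis unfolding a_coef_q1_def a_coef_def e using False by simp
    qed
  qed
  have "(\<Sum>mu\<in>M. a_coef_q1 nu mu) = (\<Sum>mu\<in>M. \<Sum>\<sigma>\<in>{\<sigma> \<in> Q. muOf \<sigma> = mu}. queue_wt 1 tvar nu (muOf \<sigma>) \<sigma>)"
    using inner by (rule sum.cong[OF refl])
  also have "\<dots> = (\<Sum>\<sigma>\<in>Q. queue_wt 1 tvar nu (muOf \<sigma>) \<sigma>)"
    by (rule sum.group[OF Q_fin finM]) (use muM in auto)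
  also have "\<dots> = (\<Sum>\<sigma>\<in>Q. P \<sigma> {})"
    by (rule sum.cong[OF refl]) (rule qwt)
  also have "\<dots> = 1"
    using main_ind[of "{}"] by simp
  finally show ?thesis unfolding M_def .
qed


end
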